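(* Let $\Sigma\in\mathbb{R}^{p\times p}$ be positive definite and suppose $\Sigma=(I-B_0)^{-T}\Omega_0(I-B_0)^{-1}$ for some $B_0\in\mathbb{D}$ and $\Omega_0=\omega_0^2I$ with $\omega_0>0$. Then $B_0$ is the unique minimum-trace DAG, i.e. $B_0=\tilde B(\pi_0)$ for every $\pi_0\in\arg\min_\pi\operatorname{tr}\tilde\Omega(\pi)$.
   Context: $\mathbb{D}$ is the set of real $p\times p$ matrices whose directed graph (edge $i\to j$ iff $b_{ij}\ne0$) is acyclic. For a permutation $\pi$ of $[p]$, $(P_\pi A)_{ij}=a_{\pi(i)\pi(j)}$. For each $\pi$, write uniquely $P_\pi\Sigma^{-1}=(I-L)D^{-1}(I-L)^T$ with $L$ strictly lower triangular and $D$ diagonal with positive diagonal, and set $\tilde B(\pi)=P_{\pi^{-1}}L$, $\tilde\Omega(\pi)=P_{\pi^{-1}}D$. A minimum-trace permutation is any $\pi_0\in\arg\min_\pi\operatorname{tr}\tilde\Omega(\pi)$ and $\tilde B(\pi_0)$ is a minimum-trace DAG. *)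

theory Defs
  imports "HOL-Analysis.Analysis"
begin

text \<open>Matrices are p x p real matrices indexed by a finite linearly ordered type 'n
  (p = CARD('n)); the linear order on 'n plays the role of the order on [p].\<close>

definition pos_def_mat :: "real^'n^'n \<Rightarrow> bool" where
  "pos_def_mat S \<longleftrightarrow> transpose S = S \<and> (\<forall>x. x \<noteq> 0 \<longrightarrow> x \<bullet> (S *v x) > 0)"

definition is_dag_mat :: "real^'n^'n \<Rightarrow> bool" where
  "is_dag_mat B \<longleftrightarrow> acyclic {(i, j). B $ i $ j \<noteq> 0}"

definition perm_act :: "('n \<Rightarrow> 'n) \<Rightarrow> real^'n^'n \<Rightarrow> real^'n^'n" where
  "perm_act \<pi> A = (\<chi> i j. A $ (\<pi> i) $ (\<pi> j))"

definition strict_lower :: "real^'n::{finite,linorder}^'n::{finite,linorder} \<Rightarrow> bool" where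
  "strict_lower L \<longleftrightarrow> (\<forall>i j. i \<le> j \<longrightarrow> L $ i $ j = 0)"

definition pos_diag :: "real^'n^'n \<Rightarrow> bool" where
  "pos_diag D \<longleftrightarrow> (\<forall>i j. i \<noteq> j \<longrightarrow> D $ i $ j = 0) \<and> (\<forall>i. D $ i $ i > 0)"

definition ldl_factors :: "real^'n::{finite,linorder}^'n::{finite,linorder} \<Rightarrow> ('n::{finite,linorder} \<Rightarrow> 'n::{finite,linorder}) \<Rightarrow> (real^'n::{finite,linorder}^'n::{finite,linorder}) \<times> (real^'n::{finite,linorder}^'n::{finite,linorder})" where
  "ldl_factors S \<pi> = (THE LD. strict_lower (fst LD) \<and> pos_diag (snd LD) \<and>
     perm_act \<pi> (matrix_inv S) =
       (mat 1 - fst LD) ** matrix_inv (snd LD) ** transpose (mat 1 - fst LD))"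

definition B_tilde :: "real^'n::{finite,linorder}^'n::{finite,linorder} \<Rightarrow> ('n::{finite,linorder} \<Rightarrow> 'n::{finite,linorder}) \<Rightarrow> real^'n::{finite,linorder}^'n::{finite,linorder}" where
  "B_tilde S \<pi> = perm_act (inv \<pi>) (fst (ldl_factors S \<pi>))"

definition Omega_tilde :: "real^'n::{finite,linorder}^'n::{finite,linorder} \<Rightarrow> ('n::{finite,linorder} \<Rightarrow> 'n::{finite,linorder}) \<Rightarrow> real^'n::{finite,linorder}^'n::{finite,linorder}" where
  "Omega_tilde S \<pi> = perm_act (inv \<pi>) (snd (ldl_factors S \<pi>))"

definition min_trace_perm :: "real^'n::{finite,linorder}^'n::{finite,linorder} \<Rightarrow> ('n::{finite,linorder} \<Rightarrow> 'n::{finite,linorder}) \<Rightarrow> bool" where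
  "min_trace_perm S \<pi>0 \<longleftrightarrow> \<pi>0 permutes UNIV \<and>
     (\<forall>\<pi>. \<pi> permutes UNIV \<longrightarrow> trace (Omega_tilde S \<pi>0) \<le> trace (Omega_tilde S \<pi>))"

end

theory Submission
  imports Defs
begin

lemma fin_linorder_induct:
  fixes k :: "'a::{finite,linorder}"
  assumes "\<And>k. (\<And>j. j < k \<Longrightarrow> P j) \<Longrightarrow> P k"
  shows "P k"
proof (induction k rule: measure_induct_rule[where f="\<lambda>k. card {j. j < k}"])
  case (less k)
  show ?case
  proof (rule assms)
    fix j assume "j < k"
    hence "{l. l < j} \<subset> {l. l < k}" by auto
    hence "card {l. l < j} < card {l. l < k}" by (simp add: psubset_card_mono)
    thus "P j" by (rule less)
  qed
qed

lemma sum_split3: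
  fixes f :: "'a::{finite,linorder} \<Rightarrow> 'b::comm_monoid_add"
  shows "sum f UNIV = sum f {j. j < k} + f k + sum f {j. k < j}"
proof -
  have U: "UNIV = ({j. j < k} \<union> {k}) \<union> {j. k < j}" by auto
  show ?thesis
    by (subst U, subst sum.union_disjoint, auto simp: sum.union_disjoint add_ac)
qed

lemma sum_single:
  fixes f :: "'a::finite \<Rightarrow> 'b::comm_monoid_add"
  assumes "\<And>j. j \<noteq> a \<Longrightarrow> f j = 0"
  shows "sum f UNIV = f a"
proof -
  have "sum f UNIV = f a + sum f (UNIV - {a})" by (simp add: sum.remove)
  also have "sum f (UNIV - {a}) = 0" using assms by (intro sum.neutral) auto
  finally show ?thesis by simp
qed

lemma perm_act_mult:
  assumes "bij \<pi>"
  shows "perm_act \<pi> (A ** B) = perm_act \<pi> A ** perm_act \<pi> (B::real^'n^'n)"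
proof -
  have "\<And>i j. (\<Sum>k\<in>UNIV. A $ \<pi> i $ k * B $ k $ \<pi> j) = (\<Sum>k\<in>UNIV. A $ \<pi> i $ \<pi> k * B $ \<pi> k $ \<pi> j)"
  proof -
    fix i j
    show "(\<Sum>k\<in>UNIV. A $ \<pi> i $ k * B $ k $ \<pi> j) = (\<Sum>k\<in>UNIV. A $ \<pi> i $ \<pi> k * B $ \<pi> k $ \<pi> j)"
      using sum.reindex_bij_betw[OF assms[unfolded bij_def[symmetric]], of "\<lambda>k. A $ \<pi> i $ k * B $ k $ \<pi> j"]
      by (simp add: bij_betw_def)
  qed
  thus ?thesis by (simp add: perm_act_def matrix_matrix_mult_def vec_eq_iff)
qed

lemma perm_act_mat: "inj \<pi> \<Longrightarrow> perm_act \<pi> (mat c) = (mat c :: real^'n^'n)"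
  by (auto simp: perm_act_def mat_def vec_eq_iff inj_eq)

lemma perm_act_transpose: "perm_act \<pi> (transpose A) = transpose (perm_act \<pi> (A::real^'n^'n))"
  by (simp add: perm_act_def transpose_def vec_eq_iff)

lemma perm_act_diff: "perm_act \<pi> (A - B) = perm_act \<pi> A - perm_act \<pi> (B::real^'n^'n)"
  by (simp add: perm_act_def vec_eq_iff)

lemma perm_act_inv: "bij \<pi> \<Longrightarrow> perm_act (inv \<pi>) (perm_act \<pi> A) = (A::real^'n^'n)"
  by (simp add: perm_act_def vec_eq_iff bij_is_surj surj_f_inv_f)

lemma matrix_inv_eq:
  fixes A B :: "real^'n^'n"
  assumes "A ** B = mat 1"
  shows "matrix_inv A = B"
proof -
  have BA: "B ** A = mat 1" using assms matrix_left_right_inverse by blast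
  have "\<exists>A'. A ** A' = mat 1 \<and> A' ** A = mat 1" using assms BA by blast
  hence A': "A ** matrix_inv A = mat 1 \<and> matrix_inv A ** A = mat 1"
    unfolding matrix_inv_def by (rule someI_ex)
  have "matrix_inv A = matrix_inv A ** (A ** B)" using assms by simp
  also have "\<dots> = (matrix_inv A ** A) ** B" by (simp add: matrix_mul_assoc)
  also have "\<dots> = B" using A' by simp
  finally show ?thesis .
qed

lemma matrix_inv_props:
  fixes A :: "real^'n^'n"
  assumes "invertible A"
  shows "A ** matrix_inv A = mat 1 \<and> matrix_inv A ** A = mat 1"
  using assms unfolding invertible_def matrix_inv_def by (rule someI_ex)

lemma perm_act_matrix_inv:
  fixes A :: "real^'n^'n"
  assumes "invertible A" "bij \<pi>"
  shows "perm_act \<pi> (matrix_inv A) = matrix_inv (perm_act \<pi> A)"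
proof -
  have "perm_act \<pi> A ** perm_act \<pi> (matrix_inv A) = mat 1"
    using matrix_inv_props[OF assms(1)] perm_act_mult[OF assms(2)] perm_act_mat[OF bij_is_inj[OF assms(2)]]
    by metis
  thus ?thesis by (simp add: matrix_inv_eq)
qed

lemma det_perm_act:
  fixes A :: "real^'n^'n"
  assumes "\<pi> permutes UNIV"
  shows "det (perm_act \<pi> A) = det A"
proof -
  let ?C = "(\<chi> i j. A$i$ \<pi> j) :: real^'n^'n"
  have "perm_act \<pi> A = (\<chi> i. ?C $ \<pi> i)" by (simp add: perm_act_def vec_eq_iff)
  hence "det (perm_act \<pi> A) = of_int (sign \<pi>) * det ?C" using det_permute_rows[OF assms, of ?C] by metis
  also have "\<dots> = of_int (sign \<pi>) * (of_int (sign \<pi>) * det A)" using det_permute_columns[OF assms] by simp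
  also have "\<dots> = of_int (sign \<pi> * sign \<pi>) * det A" by (simp only: of_int_mult mult.assoc)
  finally show ?thesis by simp
qed

lemma trace_perm_act:
  fixes A :: "real^'n^'n"
  assumes "bij \<pi>"
  shows "trace (perm_act \<pi> A) = trace A"
  unfolding trace_def perm_act_def
  using sum.reindex_bij_betw[OF assms[unfolded bij_def[symmetric]], of "\<lambda>k. A $ k $ k"]
  by simp

lemma permutes_id_le:
  fixes p :: "'a::{finite,linorder} \<Rightarrow> 'a"
  assumes "p permutes UNIV" "\<And>i. p i \<le> i"
  shows "p i = i"
proof (induction i rule: fin_linorder_induct)
  case (1 k)
  show ?case
  proof (rule ccontr)
    assume "p k \<noteq> k"
    hence lt: "p k < k" using assms(2)[of k] by simp
    hence "p (p k) = p k" using 1 by blast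
    hence "p k = k" using permutes_inj[OF assms(1)] by (meson injD)
    thus False using lt by simp
  qed
qed

lemma det_unit_lower:
  fixes A :: "real^('n::{finite,linorder})^('n::{finite,linorder})"
  assumes ld: "\<And>i j. i < j \<Longrightarrow> A$i$j = 0"
  shows "det A = prod (\<lambda>i. A$i$i) (UNIV:: 'n set)"
proof -
  let ?U = "UNIV:: 'n set"
  let ?PU = "{p. p permutes ?U}"
  let ?pp = "\<lambda>p. of_int (sign p) * prod (\<lambda>i. A$i$p i) (UNIV :: 'n set)"
  have fU: "finite ?U"
    by simp
  have id0: "{id} \<subseteq> ?PU"
    by (auto simp: permutes_id)
  have p0: "\<forall>p \<in> ?PU - {id}. ?pp p = 0"
  proof
    fix p
    assume "p \<in> ?PU - {id}"
    then obtain i where i: "p i > i"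
      using permutes_id_le by (metis DiffE eq_id_iff leI mem_Collect_eq singletonI)
    from ld[OF i] have "\<exists>i \<in> ?U. A$i$p i = 0"
      by blast
    with prod_zero[OF fU] show "?pp p = 0"
      by force
  qed
  from sum.mono_neutral_cong_left[OF finite_permutations[OF fU] id0 p0] show ?thesis
    unfolding det_def by (simp add: sign_id)
qed

definition diagm :: "('n \<Rightarrow> real) \<Rightarrow> real^'n^'n" where
  "diagm e = (\<chi> i j. if i = j then e i else 0)"

lemma tri_prod:
  fixes M N :: "real^'n^'n"
  shows "(M ** diagm e ** transpose N)$i$j = (\<Sum>k\<in>UNIV. M$i$k * e k * N$j$k)"
proof -
  have "(M ** diagm e)$i$k = M$i$k * e k" for k
    by (simp add: matrix_matrix_mult_def diagm_def if_distrib cong: if_cong)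
  thus ?thesis by (simp add: matrix_matrix_mult_def transpose_def)
qed

lemma prod_transpose:
  fixes M N :: "real^'n^'n"
  shows "(M ** transpose N)$i$j = (\<Sum>k\<in>UNIV. M$i$k * N$j$k)"
  by (simp add: matrix_matrix_mult_def transpose_def)

lemma mat_diagm: "mat c = diagm (\<lambda>_. c)"
  by (simp add: mat_def diagm_def)

lemma diagm_mult: "diagm a ** diagm b = diagm (\<lambda>i. a i * b i)"
proof -
  have "(\<Sum>k\<in>UNIV. (if i = k then a i else 0) * (if k = j then b k else 0)) = (if i = j then a i * b i else 0)" for i j
    by (subst sum_single[where a=i]) auto
  thus ?thesis by (simp add: diagm_def matrix_matrix_mult_def vec_eq_iff)
qed

lemma pos_diag_eq: "pos_diag D \<Longrightarrow> D = diagm (\<lambda>i. D$i$i)"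
  by (auto simp: pos_diag_def diagm_def vec_eq_iff)

lemma pos_diag_inv:
  assumes "pos_diag D"
  shows "matrix_inv D = diagm (\<lambda>i. 1 / D$i$i)"
proof -
  have "D ** diagm (\<lambda>i. 1 / D$i$i) = diagm (\<lambda>_. 1)"
    using assms by (subst pos_diag_eq[OF assms], subst diagm_mult)
      (auto simp: pos_diag_def intro!: arg_cong[where f=diagm] ext less_imp_neq[symmetric])
  thus ?thesis by (simp add: matrix_inv_eq mat_diagm)
qed

lemma unit_lower_entries:
  assumes "strict_lower L"
  shows "(mat 1 - L)$k$k = 1" "\<And>j. k < j \<Longrightarrow> (mat 1 - L)$k$j = 0"
  using assms by (auto simp: strict_lower_def mat_def)

lemma ldl_unique:
  fixes L L' :: "real^('n::{finite,linorder})^('n::{finite,linorder})"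
  assumes L: "strict_lower L" and L': "strict_lower L'" and e: "\<forall>i. e i > 0" and e': "\<forall>i. e' i > 0"
    and eq: "(mat 1 - L) ** diagm e ** transpose (mat 1 - L) = (mat 1 - L') ** diagm e' ** transpose (mat 1 - L')"
  shows "L = L' \<and> e = e'"
proof -
  define M where "M = mat 1 - L"
  define M' where "M' = mat 1 - L'"
  have Mk: "M$k$k = 1" "\<And>j. k < j \<Longrightarrow> M$k$j = 0" for k
    using unit_lower_entries[OF L] by (auto simp: M_def)
  have M'k: "M'$k$k = 1" "\<And>j. k < j \<Longrightarrow> M'$k$j = 0" for k
    using unit_lower_entries[OF L'] by (auto simp: M'_def)
  have A: "(\<Sum>j\<in>UNIV. M$i$j * e j * M$k$j) = (\<Sum>j\<in>UNIV. M'$i$j * e' j * M'$k$j)" for i k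
    using arg_cong[OF eq, of "\<lambda>X. X$i$k"] by (simp add: tri_prod M_def M'_def)
  have claim: "e k = e' k \<and> (\<forall>i. M$i$k = M'$i$k)" for k
  proof (induction k rule: fin_linorder_induct)
    case (1 k)
    have split: "(\<Sum>j\<in>UNIV. X$i$j * f j * X$k$j) = (\<Sum>j\<in>{j. j<k}. X$i$j * f j * X$k$j) + X$i$k * f k"
      if "X$k$k = 1" "\<And>j. k < j \<Longrightarrow> X$k$j = 0" for X i and f :: "'n \<Rightarrow> real"
      by (simp add: sum_split3[of _ k] that)
    have same: "(\<Sum>j\<in>{j. j<k}. M$i$j * e j * M$k$j) = (\<Sum>j\<in>{j. j<k}. M'$i$j * e' j * M'$k$j)" for i
      using 1 by (intro sum.cong) auto
    have key: "M$i$k * e k = M'$i$k * e' k" for i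
      using A[of i k] split[where X=M and f=e and i=i, OF Mk] split[where X=M' and f=e' and i=i, OF M'k] same[of i] by simp
    have ek: "e k = e' k" using key[of k] Mk M'k by simp
    moreover have "M$i$k = M'$i$k" for i using key[of i] ek e by (metis less_irrefl mult_right_cancel)
    ultimately show ?case by blast
  qed
  have "M = M'" using claim by (simp add: vec_eq_iff)
  hence "L = L'" by (simp add: M_def M'_def)
  moreover have "e = e'" using claim by blast
  ultimately show ?thesis by blast
qed

lemma row_unique:
  fixes L N :: "real^('n::{finite,linorder})^('n::{finite,linorder})"
  assumes L: "strict_lower L" and N: "\<forall>k. N$k$k = 1"
    and eq: "(mat 1 - L) ** transpose (mat 1 - L) = N ** transpose N"
  shows "mat 1 - L = N"
proof -
  define M where "M = mat 1 - L"
  have Mk: "M$k$k = 1" "\<And>j. k < j \<Longrightarrow> M$k$j = 0" for k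
    using unit_lower_entries[OF L] by (auto simp: M_def)
  have A: "(\<Sum>j\<in>UNIV. M$k$j * M$i$j) = (\<Sum>j\<in>UNIV. N$k$j * N$i$j)" for i k
    using arg_cong[OF eq, of "\<lambda>X. X$k$i"] by (simp add: prod_transpose M_def)
  have claim: "\<forall>j. N$k$j = M$k$j" for k
  proof (induction k rule: fin_linorder_induct)
    case (1 k)
    have step1: "M$k$j = N$k$j" if "j < k" for j
    proof (rule ccontr)
      assume nz: "M$k$j \<noteq> N$k$j"
      define Z where "Z = {j. j < k \<and> M$k$j \<noteq> N$k$j}"
      have Zne: "Z \<noteq> {}" using that nz by (auto simp: Z_def)
      define j0 where "j0 = Min Z"
      have j0Z: "j0 \<in> Z" using Zne by (simp add: j0_def)
      have j0min: "\<And>j. j \<in> Z \<Longrightarrow> j0 \<le> j" by (simp add: j0_def)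
      have j0k: "j0 < k" using j0Z by (simp add: Z_def)
      have "(\<Sum>j\<in>UNIV. N$k$j * N$j0$j) = (\<Sum>j\<in>UNIV. N$k$j * M$j0$j)"
        using 1[OF j0k] by simp
      hence "(\<Sum>j\<in>UNIV. M$k$j * M$j0$j) = (\<Sum>j\<in>UNIV. N$k$j * M$j0$j)"
        using A[where i=j0 and k=k] by simp
      hence "(\<Sum>j\<in>UNIV. (M$k$j - N$k$j) * M$j0$j) = 0"
        by (simp add: left_diff_distrib sum_subtractf)
      moreover have "(\<Sum>j\<in>UNIV. (M$k$j - N$k$j) * M$j0$j) = (M$k$j0 - N$k$j0) * M$j0$j0"
      proof (rule sum_single)
        fix j assume "j \<noteq> j0"
        show "(M$k$j - N$k$j) * M$j0$j = 0"
        proof (cases "j0 < j")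
          case True thus ?thesis using Mk by simp
        next
          case False
          hence "j < j0" using \<open>j \<noteq> j0\<close> by simp
          hence "j \<notin> Z" using j0min by fastforce
          moreover have "j < k" using \<open>j < j0\<close> j0Z by (auto simp: Z_def)
          ultimately show ?thesis by (simp add: Z_def)
        qed
      qed
      ultimately show False using j0Z Mk by (simp add: Z_def)
    qed
    have "(\<Sum>j\<in>UNIV. M$k$j * M$k$j) = (\<Sum>j\<in>UNIV. N$k$j * N$k$j)" using A[of k k] by simp
    hence "(\<Sum>j\<in>{j. j<k}. M$k$j * M$k$j) + 1 + (\<Sum>j\<in>{j. k<j}. M$k$j * M$k$j)
        = (\<Sum>j\<in>{j. j<k}. N$k$j * N$k$j) + 1 + (\<Sum>j\<in>{j. k<j}. N$k$j * N$k$j)"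
      using Mk N by (simp add: sum_split3[of _ k])
    moreover have "(\<Sum>j\<in>{j. j<k}. M$k$j * M$k$j) = (\<Sum>j\<in>{j. j<k}. N$k$j * N$k$j)"
      using step1 by (intro sum.cong) auto
    moreover have "(\<Sum>j\<in>{j. k<j}. M$k$j * M$k$j) = 0" using Mk by simp
    ultimately have "(\<Sum>j\<in>{j. k<j}. N$k$j * N$k$j) = 0" by simp
    hence gt: "N$k$j = 0" if "k < j" for j
      using sum_nonneg_eq_0_iff[of "{j. k<j}" "\<lambda>j. N$k$j * N$k$j"] that by simp
    show ?case
    proof
      fix j
      show "N$k$j = M$k$j"
        using step1[of j] gt[of j] Mk N by (cases j k rule: linorder_cases) auto
    qed
  qed
  show ?thesis using claim by (simp add: vec_eq_iff M_def)
qed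

lemma quad_sym:
  fixes T :: "real^'n^'n"
  assumes "transpose T = T"
  shows "x \<bullet> (T *v y) = y \<bullet> (T *v x)"
proof -
  have "x \<bullet> (T *v y) = (\<Sum>i\<in>UNIV. \<Sum>j\<in>UNIV. x$i * T$i$j * y$j)"
    by (simp add: inner_vec_def matrix_vector_mult_def sum_distrib_left mult.assoc)
  also have "\<dots> = (\<Sum>j\<in>UNIV. \<Sum>i\<in>UNIV. x$i * T$i$j * y$j)" by (rule sum.swap)
  also have "\<dots> = (\<Sum>j\<in>UNIV. \<Sum>i\<in>UNIV. y$j * T$j$i * x$i)"
  proof -
    have "T$i$j = T$j$i" for i j using arg_cong[OF assms, of "\<lambda>X. X$j$i"] by (simp add: transpose_def)
    thus ?thesis by (simp add: mult.commute mult.left_commute)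
  qed
  also have "\<dots> = y \<bullet> (T *v x)"
    by (simp add: inner_vec_def matrix_vector_mult_def sum_distrib_left mult.assoc)
  finally show ?thesis .
qed

lemma column_exists:
  fixes T :: "real^('n::{finite,linorder})^('n::{finite,linorder})"
  assumes pd: "\<forall>x. x \<noteq> 0 \<longrightarrow> x \<bullet> (T *v x) > 0"
  shows "\<exists>c. c$k = 1 \<and> (\<forall>i. i < k \<longrightarrow> c$i = 0) \<and> (\<forall>i. k < i \<longrightarrow> (T *v c)$i = 0)"
proof -
  define G :: "real^('n::{finite,linorder})^('n::{finite,linorder})" where "G = (\<chi> i j. if k < i then T$i$j else (if i = j then 1 else 0))"
  have Gv: "(G *v x)$i = (if k < i then (T *v x)$i else x$i)" for x i
  proof (cases "k < i")
    case True thus ?thesis by (simp add: G_def matrix_vector_mult_def)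
  next
    case False
    have "(\<Sum>j\<in>UNIV. (if i = j then 1 else 0) * x$j) = x$i" by (subst sum_single[where a=i]) auto
    thus ?thesis using False by (simp add: G_def matrix_vector_mult_def)
  qed
  have ker: "x = 0" if "G *v x = 0" for x
  proof (rule ccontr)
    assume "x \<noteq> 0"
    hence pos: "x \<bullet> (T *v x) > 0" using pd by blast
    have h: "x$i * (T *v x)$i = 0" for i
      using arg_cong[OF that, of "\<lambda>v. v$i"] Gv[of x i] by (cases "k < i") auto
    have "x \<bullet> (T *v x) = 0" by (simp add: inner_vec_def h)
    thus False using pos by simp
  qed
  have "inj ((*v) G)"
  proof (rule injI)
    fix x y assume "G *v x = G *v y"
    hence "G *v (x - y) = 0" by (simp add: matrix_vector_mult_diff_distrib)
    thus "x = y" using ker[of "x - y"] by simp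
  qed
  then obtain B where "B ** G = mat 1" using matrix_left_invertible_injective by blast
  hence GB: "G ** B = mat 1" using matrix_left_right_inverse by blast
  define b :: "real^('n::{finite,linorder})" where "b = (\<chi> i. if k < i then - T$i$k else 0)"
  define x where "x = B *v b"
  have Gx: "G *v x = b" by (simp add: x_def matrix_vector_mul_assoc GB)
  define c where "c = axis k 1 + x"
  have Tax: "(T *v axis k 1)$i = T$i$k" for i
    by (simp add: matrix_vector_mult_def axis_def, subst sum_single[where a=k]) auto
  have xle: "x$i = 0" if "\<not> k < i" for i using arg_cong[OF Gx, of "\<lambda>v. v$i"] Gv[of x i] that
    by (simp add: b_def)
  have Txgt: "(T *v x)$i = - T$i$k" if "k < i" for i using arg_cong[OF Gx, of "\<lambda>v. v$i"] Gv[of x i] that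
    by (simp add: b_def)
  have "c$k = 1" using xle[of k] by (simp add: c_def axis_def)
  moreover have "\<forall>i. i < k \<longrightarrow> c$i = 0" using xle by (auto simp: c_def axis_def)
  moreover have "\<forall>i. k < i \<longrightarrow> (T *v c)$i = 0"
    using Tax Txgt by (simp add: c_def matrix_vector_right_distrib)
  ultimately show ?thesis by blast
qed

lemma ldl_exists:
  fixes T :: "real^('n::{finite,linorder})^('n::{finite,linorder})"
  assumes sym: "transpose T = T" and pd: "\<forall>x. x \<noteq> 0 \<longrightarrow> x \<bullet> (T *v x) > 0"
  shows "\<exists>L D. strict_lower L \<and> pos_diag D \<and> matrix_inv T = (mat 1 - L) ** matrix_inv D ** transpose (mat 1 - L)"
proof -
  obtain C where C: "\<And>k. C k $ k = 1" "\<And>k i. i < k \<Longrightarrow> C k $ i = 0" "\<And>k i. k < i \<Longrightarrow> (T *v C k)$i = 0"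
    using column_exists[OF pd] by metis
  define M :: "real^('n::{finite,linorder})^('n::{finite,linorder})" where "M = (\<chi> i j. C j $ i)"
  define L where "L = mat 1 - M"
  have SL: "strict_lower L"
    unfolding strict_lower_def L_def M_def using C(1,2) by (auto simp: mat_def)
  define Dd :: "real^('n::{finite,linorder})^('n::{finite,linorder})" where "Dd = (\<chi> j l. C j \<bullet> (T *v C l))"
  have MTM: "transpose M ** T ** M = Dd"
  proof -
    have "(\<Sum>m\<in>UNIV. (\<Sum>i\<in>UNIV. C j $ i * T$i$m) * C l $ m) = (\<Sum>i\<in>UNIV. C j $ i * (\<Sum>m\<in>UNIV. T$i$m * C l $ m))" for j l
      by (simp add: sum_distrib_left sum_distrib_right mult.assoc, rule sum.swap)
    thus ?thesis by (simp add: M_def Dd_def matrix_matrix_mult_def transpose_def inner_vec_def matrix_vector_mult_def vec_eq_iff)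
  qed
  have gt0: "Dd$j$l = 0" if "l < j" for j l
  proof -
    have h: "C j $ i * (T *v C l)$i = 0" for i
      using C(2)[of i j] C(3)[of l i] that by (cases "i < j") auto
    show ?thesis by (simp add: Dd_def inner_vec_def h)
  qed
  have PD: "pos_diag Dd"
    unfolding pos_diag_def
  proof safe
    fix i j :: 'n assume "i \<noteq> j"
    show "Dd$i$j = 0"
    proof (cases "j < i")
      case True thus ?thesis using gt0 by simp
    next
      case False
      hence "i < j" using \<open>i \<noteq> j\<close> by simp
      hence "Dd$j$i = 0" using gt0 by simp
      thus ?thesis using quad_sym[OF sym, of "C i" "C j"] by (simp add: Dd_def)
    qed
  next
    fix i :: 'n
    have "C i \<noteq> 0" using C(1)[of i] by auto
    thus "Dd$i$i > 0" using pd by (simp add: Dd_def)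
  qed
  have detM: "det M = 1"
    by (subst det_unit_lower) (auto simp: M_def C(1,2))
  have "det (transpose M) \<noteq> 0" using detM by simp
  hence "invertible (transpose M)" by (simp add: invertible_det_nz)
  then have MI: "matrix_inv (transpose M) ** transpose M = mat 1" using matrix_inv_props by blast
  define X where "X = M ** matrix_inv Dd ** transpose M"
  have DI: "Dd ** matrix_inv Dd = mat 1"
  proof -
    have "Dd ** matrix_inv Dd = diagm (\<lambda>i. Dd$i$i) ** diagm (\<lambda>i. 1 / Dd$i$i)"
      using pos_diag_inv[OF PD] pos_diag_eq[OF PD] by metis
    also have "\<dots> = diagm (\<lambda>i. 1)" unfolding diagm_mult
      using PD by (intro arg_cong[where f=diagm] ext) (auto simp: pos_diag_def less_imp_neq[symmetric])
    finally show ?thesis by (simp add: mat_diagm)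
  qed
  have "transpose M ** (T ** X) = transpose M"
  proof -
    have "transpose M ** (T ** X) = (transpose M ** T ** M) ** matrix_inv Dd ** transpose M"
      by (simp add: X_def matrix_mul_assoc)
    also have "\<dots> = transpose M" using MTM DI by (simp add: matrix_mul_assoc)
    finally show ?thesis .
  qed
  hence "matrix_inv (transpose M) ** (transpose M ** (T ** X)) = mat 1"
    using MI by simp
  hence "T ** X = mat 1" using MI by (metis matrix_mul_assoc matrix_mul_lid)
  hence "matrix_inv T = X" by (rule matrix_inv_eq)
  moreover have "mat 1 - L = M" by (simp add: L_def)
  ultimately show ?thesis using SL PD unfolding X_def by metis
qed

lemma rank_props:
  fixes h :: "'a::finite \<Rightarrow> 'b::linorder"
  assumes "inj h"
  defines "\<tau> \<equiv> \<lambda>a. card {b. h b < h a}"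
  shows "\<And>a b. h a < h b \<Longrightarrow> \<tau> a < \<tau> b" and "bij_betw \<tau> UNIV {..<CARD('a)}"
proof -
  show mono: "\<tau> a < \<tau> b" if "h a < h b" for a b
  proof -
    have "{c. h c < h a} \<subset> {c. h c < h b}" using that by auto
    thus ?thesis unfolding \<tau>_def by (simp add: psubset_card_mono)
  qed
  have injt: "inj \<tau>"
  proof (rule injI)
    fix a b assume eq: "\<tau> a = \<tau> b"
    show "a = b"
    proof (rule ccontr)
      assume "a \<noteq> b"
      hence "h a \<noteq> h b" using assms(1) by (meson injD)
      hence "h a < h b \<or> h b < h a" by auto
      thus False using mono eq by fastforce
    qed
  qed
  have lt: "\<tau> a < CARD('a)" for a
  proof -
    have "{b. h b < h a} \<subset> UNIV" by auto
    thus ?thesis unfolding \<tau>_def by (simp add: psubset_card_mono)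
  qed
  have sub: "range \<tau> \<subseteq> {..<CARD('a)}" using lt by auto
  have "card (range \<tau>) = CARD('a)" using injt by (simp add: card_image)
  hence "range \<tau> = {..<CARD('a)}" using sub by (simp add: card_subset_eq)
  thus "bij_betw \<tau> UNIV {..<CARD('a)}" using injt by (simp add: bij_betw_def)
qed

lemma sort_perm:
  fixes key :: "'n::{finite,linorder} \<Rightarrow> nat"
  shows "\<exists>\<sigma>::'n::{finite,linorder}\<Rightarrow>'n::{finite,linorder}. bij \<sigma> \<and> (\<forall>a b. key a < key b \<longrightarrow> \<sigma> a < \<sigma> b)"
proof -
  define N where "N = CARD('n)"
  define \<rho> where "\<rho> = (\<lambda>a::'n::{finite,linorder}. card {b. id b < id a})"
  have \<rho>mono: "\<And>a b. a < b \<Longrightarrow> \<rho> a < \<rho> b" and \<rho>bij: "bij_betw \<rho> UNIV {..<N}"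
    using rank_props[of "id :: 'n::{finite,linorder} \<Rightarrow> 'n"] unfolding \<rho>_def N_def by auto
  have \<rho>lt: "\<rho> a < N" for a using \<rho>bij by (auto simp: bij_betw_def)
  define h where "h = (\<lambda>a. key a * N + \<rho> a)"
  have hdiv: "h a div N = key a" "h a mod N = \<rho> a" for a using \<rho>lt[of a] by (auto simp: h_def)
  have injh: "inj h"
  proof (rule injI)
    fix a b assume "h a = h b"
    hence "\<rho> a = \<rho> b" using hdiv by metis
    thus "a = b" using \<rho>bij by (auto simp: bij_betw_def inj_eq)
  qed
  have hmono: "h a < h b" if "key a < key b" for a b
  proof -
    have "h a < (key a + 1) * N" using \<rho>lt[of a] by (simp add: h_def)
    also have "\<dots> \<le> key b * N" using that by (intro mult_right_mono) auto
    also have "\<dots> \<le> h b" by (simp add: h_def)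
    finally show ?thesis .
  qed
  define \<tau> where "\<tau> = (\<lambda>a. card {b. h b < h a})"
  have \<tau>mono: "\<And>a b. h a < h b \<Longrightarrow> \<tau> a < \<tau> b" and \<tau>bij: "bij_betw \<tau> UNIV {..<N}"
    using rank_props[OF injh] unfolding \<tau>_def N_def by auto
  define \<sigma> where "\<sigma> = (\<lambda>a. inv_into UNIV \<rho> (\<tau> a))"
  have \<rho>\<sigma>: "\<rho> (\<sigma> a) = \<tau> a" for a
  proof -
    have "\<tau> a \<in> range \<rho>" using \<tau>bij \<rho>bij by (auto simp: bij_betw_def)
    thus ?thesis by (simp add: \<sigma>_def f_inv_into_f)
  qed
  have "inj \<sigma>"
  proof (rule injI)
    fix a b assume "\<sigma> a = \<sigma> b"
    hence "\<tau> a = \<tau> b" using \<rho>\<sigma> by metis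
    thus "a = b" using \<tau>bij by (auto simp: bij_betw_def inj_eq)
  qed
  hence "bij \<sigma>" using finite_UNIV_inj_surj[of \<sigma>] by (simp add: bij_def)
  moreover have "\<sigma> a < \<sigma> b" if "key a < key b" for a b
  proof (rule ccontr)
    assume "\<not> \<sigma> a < \<sigma> b"
    hence "\<rho> (\<sigma> b) \<le> \<rho> (\<sigma> a)" using \<rho>mono by (metis le_less not_less)
    moreover have "\<tau> a < \<tau> b" using \<tau>mono hmono that by blast
    ultimately show False using \<rho>\<sigma> by simp
  qed
  ultimately have "bij \<sigma> \<and> (\<forall>a b. key a < key b \<longrightarrow> \<sigma> a < \<sigma> b)" by blast
  thus ?thesis by blast
qed

lemma topo_perm:
  fixes R :: "('n::{finite,linorder} \<times> 'n) set"
  assumes "acyclic R"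
  shows "\<exists>\<sigma>::'n::{finite,linorder}\<Rightarrow>'n::{finite,linorder}. bij \<sigma> \<and> (\<forall>a b. (a,b) \<in> R \<longrightarrow> \<sigma> b < \<sigma> a)"
proof -
  define key where "key = (\<lambda>a. card (R\<^sup>+ `` {a}))"
  have "key b < key a" if "(a,b) \<in> R" for a b
  proof -
    have "R\<^sup>+ `` {b} \<subseteq> R\<^sup>+ `` {a}" using that by (auto intro: trancl_into_trancl2)
    moreover have "b \<in> R\<^sup>+ `` {a}" using that by auto
    moreover have "b \<notin> R\<^sup>+ `` {b}" using assms by (auto simp: acyclic_def)
    ultimately have "R\<^sup>+ `` {b} \<subset> R\<^sup>+ `` {a}" by blast
    thus ?thesis unfolding key_def by (simp add: psubset_card_mono)
  qed
  then have kk: "\<And>a b. (a,b) \<in> R \<Longrightarrow> key b < key a" by blast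
  obtain \<sigma> :: "'n::{finite,linorder} \<Rightarrow> 'n::{finite,linorder}"
    where \<sigma>: "bij \<sigma> \<and> (\<forall>a b. key a < key b \<longrightarrow> \<sigma> a < \<sigma> b)"
    using sort_perm[of key] by (elim exE)
  have "bij \<sigma> \<and> (\<forall>a b. (a,b) \<in> R \<longrightarrow> \<sigma> b < \<sigma> a)"
    using \<sigma> kk by simp
  thus ?thesis by (intro exI[of _ \<sigma>])
qed

lemma sum_reindex_bij:
  assumes "bij \<pi>"
  shows "(\<Sum>j\<in>UNIV. g (\<pi> j)) = (\<Sum>b\<in>UNIV. g b)"
  using sum.reindex_bij_betw[OF assms[unfolded bij_def[symmetric]], of g] by simp

lemma pd_perm:
  fixes S :: "real^'n^'n"
  assumes bij: "bij \<pi>" and pd: "\<forall>x. x \<noteq> 0 \<longrightarrow> x \<bullet> (S *v x) > 0"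
  shows "\<forall>x. x \<noteq> 0 \<longrightarrow> x \<bullet> (perm_act \<pi> S *v x) > 0"
proof (intro allI impI)
  fix x :: "real^'n" assume "x \<noteq> 0"
  define y :: "real^'n" where "y = (\<chi> a. x $ inv \<pi> a)"
  have xy: "x$i = y$(\<pi> i)" for i by (simp add: y_def bij_is_inj[OF bij])
  have "y \<noteq> 0"
  proof
    assume "y = 0"
    hence "x = 0" using xy by (simp add: vec_eq_iff)
    thus False using \<open>x \<noteq> 0\<close> by simp
  qed
  have "x \<bullet> (perm_act \<pi> S *v x) = (\<Sum>i\<in>UNIV. y$(\<pi> i) * (\<Sum>j\<in>UNIV. S$(\<pi> i)$(\<pi> j) * y$(\<pi> j)))"
    by (simp add: inner_vec_def matrix_vector_mult_def perm_act_def xy)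
  also have "\<dots> = (\<Sum>i\<in>UNIV. y$(\<pi> i) * (\<Sum>b\<in>UNIV. S$(\<pi> i)$b * y$b))"
    using sum_reindex_bij[OF bij, of "\<lambda>b. S$(\<pi> _)$b * y$b"] by simp
  also have "\<dots> = (\<Sum>a\<in>UNIV. y$a * (\<Sum>b\<in>UNIV. S$a$b * y$b))"
    using sum_reindex_bij[OF bij, of "\<lambda>a. y$a * (\<Sum>b\<in>UNIV. S$a$b * y$b)"] by simp
  also have "\<dots> = y \<bullet> (S *v y)" by (simp add: inner_vec_def matrix_vector_mult_def)
  finally show "x \<bullet> (perm_act \<pi> S *v x) > 0" using pd \<open>y \<noteq> 0\<close> by simp
qed

lemma mat_mult_mat: "mat a ** mat b = (mat (a * b) :: real^'n^'n)"
  by (simp add: mat_diagm diagm_mult)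

lemma ldl_unique2:
  fixes L L' D D' :: "real^('n::{finite,linorder})^('n::{finite,linorder})"
  assumes "strict_lower L" "pos_diag D" "strict_lower L'" "pos_diag D'"
    and eq: "(mat 1 - L) ** matrix_inv D ** transpose (mat 1 - L) = (mat 1 - L') ** matrix_inv D' ** transpose (mat 1 - L')"
  shows "L = L' \<and> D = D'"
proof -
  have pos: "\<forall>i. 1 / D$i$i > 0" "\<forall>i. 1 / D'$i$i > 0" using assms(2,4) by (auto simp: pos_diag_def)
  have eq': "(mat 1 - L) ** diagm (\<lambda>i. 1 / D$i$i) ** transpose (mat 1 - L) = (mat 1 - L') ** diagm (\<lambda>i. 1 / D'$i$i) ** transpose (mat 1 - L')"
    using eq by (simp only: pos_diag_inv[OF assms(2)] pos_diag_inv[OF assms(4)])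
  have r: "L = L' \<and> (\<lambda>i. 1 / D$i$i) = (\<lambda>i. 1 / D'$i$i)"
    by (rule ldl_unique[OF assms(1,3) pos eq'])
  have "D$i$j = D'$i$j" for i j
  proof (cases "i = j")
    case True
    have "1 / D$i$i = 1 / D'$i$i" using r by meson
    thus ?thesis using True by simp
  next
    case False
    thus ?thesis using assms(2,4) by (simp add: pos_diag_def)
  qed
  hence "D = D'" by (simp add: vec_eq_iff)
  thus ?thesis using r by blast
qed

lemma det_ldl:
  fixes L :: "real^('n::{finite,linorder})^('n::{finite,linorder})"
  assumes "strict_lower L"
  shows "det ((mat 1 - L) ** diagm f ** transpose (mat 1 - L)) = prod f UNIV"
proof -
  have d1: "det (mat 1 - L) = 1"
    using assms by (subst det_unit_lower) (auto simp: strict_lower_def mat_def)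
  have d2: "det (diagm f) = prod f UNIV" by (subst det_diagonal) (auto simp: diagm_def)
  show ?thesis by (simp add: det_mul d1 d2)
qed

lemma scale_cancel:
  fixes M N :: "real^'n^'n"
  assumes "M ** mat a ** transpose M = N ** mat a ** transpose N" "a \<noteq> 0"
  shows "M ** transpose M = N ** transpose N"
proof -
  have "(M ** mat a ** transpose M)$i$j = a * (M ** transpose M)$i$j" for M :: "real^'n^'n" and i j
    by (simp only: mat_diagm tri_prod) (simp add: prod_transpose sum_distrib_left mult_ac)
  thus ?thesis using assms by (simp add: vec_eq_iff)
qed

lemma amgm_eq:
  fixes e :: "'n::finite \<Rightarrow> real"
  assumes e: "\<forall>i. e i > 0" and c: "c > 0"
    and pr: "prod (\<lambda>i. 1 / e i) UNIV = prod (\<lambda>i::'n::finite. 1 / c) UNIV"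
    and sm: "sum e UNIV \<le> of_nat CARD('n) * c"
  shows "e i = c"
proof -
  define x where "x = (\<lambda>i. e i / c)"
  have xpos: "x i > 0" for i using e c by (simp add: x_def)
  have "1 / prod e UNIV = 1 / prod (\<lambda>i::'n::finite. c) UNIV" using pr by (simp add: prod_dividef power_one_over)
  moreover have "prod e UNIV > 0" "prod (\<lambda>i::'n::finite. c) UNIV > 0" using e c by (auto intro: prod_pos)
  ultimately have pe: "prod e UNIV = prod (\<lambda>i::'n::finite. c) UNIV" by (simp add: field_simps)
  have "prod x UNIV = 1" unfolding x_def prod_dividef pe using c by simp
  hence lsum: "(\<Sum>i\<in>UNIV. ln (x i)) = 0" using ln_prod[of UNIV x] xpos by (metis less_irrefl ln_one finite)
  have "sum x UNIV = sum e UNIV / c" by (simp add: x_def sum_divide_distrib)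
  hence xs: "sum x UNIV \<le> of_nat CARD('n)" using sm c by (simp add: divide_le_eq mult.commute)
  define t where "t = (\<lambda>i. x i - 1 - ln (x i))"
  have tnn: "\<forall>i\<in>UNIV. t i \<ge> 0" using ln_le_minus_one xpos by (simp add: t_def)
  have "sum t UNIV = sum x UNIV - of_nat CARD('n) - (\<Sum>i\<in>UNIV. ln (x i))"
    by (simp add: t_def sum_subtractf)
  hence "sum t UNIV \<le> 0" using xs lsum by simp
  hence "sum t UNIV = 0" using sum_nonneg[of UNIV t] tnn by simp
  hence "t i = 0" using sum_nonneg_eq_0_iff[of UNIV t] tnn by simp
  hence "ln (x i) = x i - 1" by (simp add: t_def)
  hence "x i = 1" using ln_eq_minus_one xpos by blast
  thus ?thesis using c by (simp add: x_def)
qed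

theorem lemma3:
  fixes S B0 :: "(real^('n::{finite,linorder}))^('n::{finite,linorder})" and \<omega>0 :: real
  assumes "pos_def_mat S"
    and "is_dag_mat B0"
    and "\<omega>0 > 0"
    and "S = transpose (matrix_inv (mat 1 - B0)) ** mat (\<omega>0 ^ 2) ** matrix_inv (mat 1 - B0)"
  shows "\<forall>\<pi>0. min_trace_perm S \<pi>0 \<longrightarrow> B_tilde S \<pi>0 = B0"
proof (intro allI impI)
  fix \<pi>0 :: "'n \<Rightarrow> 'n"
  assume minp: "min_trace_perm S \<pi>0"
  define c where "c = \<omega>0 ^ 2"
  have c: "c > 0" using assms(3) by (simp add: c_def)
  define R where "R = {(i, j). B0 $ i $ j \<noteq> 0}"
  have acy: "acyclic R" using assms(2) by (simp add: is_dag_mat_def R_def)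
  have nodiag: "B0$i$i = 0" for i
  proof (rule ccontr)
    assume "B0$i$i \<noteq> 0"
    hence "(i,i) \<in> R\<^sup>+" by (auto simp: R_def)
    thus False using acy by (simp add: acyclic_def)
  qed
  obtain \<sigma> :: "'n \<Rightarrow> 'n" where \<sigma>: "bij \<sigma>" "\<And>a b. (a,b) \<in> R \<Longrightarrow> \<sigma> b < \<sigma> a"
    using topo_perm[OF acy] by blast
  define \<pi>1 where "\<pi>1 = inv \<sigma>"
  have bij1: "bij \<pi>1" using \<sigma>(1) by (simp add: \<pi>1_def bij_imp_bij_inv)
  have perm1: "\<pi>1 permutes UNIV" using bij1 by (simp add: permutes_univ bij_iff)
  have \<sigma>\<pi>1: "\<sigma> (\<pi>1 x) = x" for x using \<sigma>(1) by (simp add: \<pi>1_def bij_is_surj surj_f_inv_f)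
  define L1 where "L1 = perm_act \<pi>1 B0"
  have SL1: "strict_lower L1"
    unfolding strict_lower_def
  proof (intro allI impI)
    fix i j :: 'n assume "i \<le> j"
    show "L1$i$j = 0"
    proof (rule ccontr)
      assume "L1$i$j \<noteq> 0"
      hence "(\<pi>1 i, \<pi>1 j) \<in> R" by (simp add: L1_def perm_act_def R_def)
      hence "j < i" using \<sigma>(2) \<sigma>\<pi>1 by metis
      thus False using \<open>i \<le> j\<close> by simp
    qed
  qed
  define N where "N = (\<lambda>\<pi>. mat 1 - perm_act \<pi> B0)"
  have PY: "perm_act \<pi> (mat 1 - B0) = N \<pi>" if "inj \<pi>" for \<pi>
    using that by (simp add: N_def perm_act_diff perm_act_mat)
  have Ndiag: "N \<pi> $ k $ k = 1" for \<pi> k by (simp add: N_def perm_act_def mat_def nodiag)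
  define Y where "Y = mat 1 - B0"
  have "det Y = det (perm_act \<pi>1 Y)" using det_perm_act[OF perm1] by simp
  also have "\<dots> = 1"
    unfolding Y_def PY[OF bij_is_inj[OF bij1]] N_def L1_def[symmetric]
    using SL1 by (subst det_unit_lower) (auto simp: strict_lower_def mat_def)
  finally have "det Y \<noteq> 0" by simp
  hence invY: "invertible Y" by (simp add: invertible_det_nz)
  define X where "X = matrix_inv Y"
  have YX: "Y ** X = mat 1" "X ** Y = mat 1" using matrix_inv_props[OF invY] by (auto simp: X_def)
  have SX: "S = transpose X ** mat c ** X" using assms(4) by (simp add: X_def Y_def c_def)
  define K where "K = Y ** mat (1/c) ** transpose Y"
  have "S ** K = transpose X ** (mat c ** ((X ** Y) ** (mat (1/c) ** transpose Y)))"
    by (simp add: SX K_def matrix_mul_assoc)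
  also have "\<dots> = transpose X ** transpose Y"
  proof -
    have "mat c ** (mat (1/c) ** transpose Y) = (mat c ** mat (1/c)) ** transpose Y"
      by (simp add: matrix_mul_assoc)
    also have "\<dots> = transpose Y" using c by (simp add: mat_mult_mat)
    finally show ?thesis by (simp add: YX)
  qed
  also have "\<dots> = mat 1" by (simp add: YX flip: matrix_transpose_mul)
  finally have SK: "S ** K = mat 1" .
  hence invS: "invertible S" using matrix_left_right_inverse invertible_def by blast
  have SinvK: "matrix_inv S = K" using SK by (rule matrix_inv_eq)
  have PK: "perm_act \<pi> (matrix_inv S) = N \<pi> ** mat (1/c) ** transpose (N \<pi>)" if "bij \<pi>" for \<pi>
    using that unfolding SinvK K_def
    by (simp add: perm_act_mult perm_act_transpose perm_act_mat bij_is_inj PY[unfolded Y_def[symmetric]] flip: Y_def)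
  define P where "P = (\<lambda>\<pi> LD. strict_lower (fst LD) \<and> pos_diag (snd LD) \<and>
     perm_act \<pi> (matrix_inv S) = (mat 1 - fst LD) ** matrix_inv (snd LD) ** transpose (mat 1 - fst LD))"
  have ldlP: "ldl_factors S \<pi> = (THE LD. P \<pi> LD)" for \<pi> by (simp add: ldl_factors_def P_def)
  have symS: "transpose S = S" and pdS: "\<forall>x. x \<noteq> 0 \<longrightarrow> x \<bullet> (S *v x) > 0"
    using assms(1) by (auto simp: pos_def_mat_def)
  have ex1: "\<exists>!LD. P \<pi> LD" if "bij \<pi>" for \<pi>
  proof -
    define T where "T = perm_act \<pi> S"
    have "transpose T = T" using symS by (simp add: T_def flip: perm_act_transpose)
    moreover have "\<forall>x. x \<noteq> 0 \<longrightarrow> x \<bullet> (T *v x) > 0" using pd_perm[OF that pdS] by (simp add: T_def)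
    ultimately obtain L D where LD: "strict_lower L" "pos_diag D"
      "matrix_inv T = (mat 1 - L) ** matrix_inv D ** transpose (mat 1 - L)"
      using ldl_exists by blast
    have "matrix_inv T = perm_act \<pi> (matrix_inv S)"
      using perm_act_matrix_inv[OF invS that] by (simp add: T_def)
    hence "P \<pi> (L, D)" using LD by (simp add: P_def)
    moreover have "LD' = (L, D)" if "P \<pi> LD'" for LD'
      using ldl_unique2[of "fst LD'" "snd LD'" L D] that \<open>P \<pi> (L, D)\<close> by (auto simp: P_def)
    ultimately show ?thesis by blast
  qed
  have spec: "P \<pi> (ldl_factors S \<pi>)" if "bij \<pi>" for \<pi>
    unfolding ldlP using theI'[OF ex1[OF that]] .
  have char: "ldl_factors S \<pi> = LD" if "bij \<pi>" "P \<pi> LD" for \<pi> LD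
    unfolding ldlP using the1_equality[OF ex1[OF that(1)] that(2)] .
  have invmat: "matrix_inv (mat c :: real^('n::{finite,linorder})^('n::{finite,linorder})) = mat (1/c)"
    using c by (intro matrix_inv_eq) (simp add: mat_mult_mat)
  have pdc: "pos_diag (mat c :: real^('n::{finite,linorder})^('n::{finite,linorder}))" using c by (simp add: pos_diag_def mat_def)
  have "P \<pi>1 (L1, mat c)"
    unfolding P_def using SL1 pdc PK[OF bij1] by (simp add: invmat N_def L1_def)
  hence f1: "ldl_factors S \<pi>1 = (L1, mat c)" using char[OF bij1] by blast
  have "Omega_tilde S \<pi>1 = mat c"
    unfolding Omega_tilde_def f1 using bij_imp_bij_inv[OF bij1] by (simp add: perm_act_mat bij_is_inj)
  hence tr1: "trace (Omega_tilde S \<pi>1) = of_nat CARD('n) * c" by (simp add: trace_def mat_def)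
  have perm0: "\<pi>0 permutes UNIV" using minp by (simp add: min_trace_perm_def)
  have bij0: "bij \<pi>0" using perm0 by (simp add: permutes_univ bij_iff)
  obtain L D where LD: "ldl_factors S \<pi>0 = (L, D)" by (cases "ldl_factors S \<pi>0") auto
  have P0: "P \<pi>0 (L, D)" using spec[OF bij0] LD by simp
  hence SL: "strict_lower L" and PD: "pos_diag D"
    and eq0: "perm_act \<pi>0 (matrix_inv S) = (mat 1 - L) ** matrix_inv D ** transpose (mat 1 - L)"
    by (auto simp: P_def)
  define e where "e = (\<lambda>i. D$i$i)"
  have epos: "\<forall>i. e i > 0" using PD by (simp add: pos_diag_def e_def)
  have "trace (Omega_tilde S \<pi>0) = trace D"
    unfolding Omega_tilde_def LD using bij_imp_bij_inv[OF bij0] by (simp add: trace_perm_act)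
  moreover have "trace (Omega_tilde S \<pi>0) \<le> trace (Omega_tilde S \<pi>1)"
    using minp perm1 by (simp add: min_trace_perm_def)
  ultimately have "trace D \<le> of_nat CARD('n) * c" using tr1 by simp
  hence "sum e UNIV \<le> of_nat CARD('n) * c" by (simp add: trace_def e_def)
  moreover have "prod (\<lambda>i. 1 / e i) UNIV = prod (\<lambda>i::'n::{finite,linorder}. 1 / c) UNIV"
  proof -
    have "det (perm_act \<pi>0 (matrix_inv S)) = det (perm_act \<pi>1 (matrix_inv S))"
      using det_perm_act[OF perm0] det_perm_act[OF perm1] by simp
    moreover have "det (perm_act \<pi>0 (matrix_inv S)) = prod (\<lambda>i. 1 / e i) UNIV"
      unfolding eq0 pos_diag_inv[OF PD] using det_ldl[OF SL] by (simp add: e_def)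
    moreover have "det (perm_act \<pi>1 (matrix_inv S)) = prod (\<lambda>i::'n::{finite,linorder}. 1 / c) UNIV"
      using PK[OF bij1] det_ldl[OF SL1, of "\<lambda>_. 1/c"] by (simp add: mat_diagm N_def L1_def)
    ultimately show ?thesis by simp
  qed
  ultimately have ec: "e i = c" for i using amgm_eq[OF epos c] by blast
  have "D = mat c" using pos_diag_eq[OF PD] ec by (simp add: e_def mat_diagm)
  hence "(mat 1 - L) ** mat (1/c) ** transpose (mat 1 - L) = N \<pi>0 ** mat (1/c) ** transpose (N \<pi>0)"
    using eq0 PK[OF bij0] invmat by simp
  hence "(mat 1 - L) ** transpose (mat 1 - L) = N \<pi>0 ** transpose (N \<pi>0)"
    using c by (intro scale_cancel[of _ "1/c"]) auto
  hence "mat 1 - L = N \<pi>0" using row_unique[OF SL] Ndiag by blast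
  hence "L = perm_act \<pi>0 B0" by (simp add: N_def)
  thus "B_tilde S \<pi>0 = B0" unfolding B_tilde_def LD using perm_act_inv[OF bij0] by simp
qed

end
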